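(* Let $\psi(x)=-2\pi\sin(2\pi x)$, $b\ge2$ an integer, $\gamma\in(1/b,1)$, and let $\Delta_{b,\gamma}=\max_{t\in\mathbb{R}}(\sin(bt)+\gamma\sin t)$. If $k,l\in\mathcal{A}$ and $x^*\in\mathbb{R}$ satisfy $(k,l)\in E(1,x^* )$, then $$\Big|\sin\tfrac{2\pi(x^*+k)}{b}-\sin\tfrac{2\pi(x^*+l)}{b}\Big|\le\frac{2\Delta_{b,\gamma}\gamma}{1-\gamma^2}\le\frac{2\gamma}{1-\gamma},\qquad \Big|\cos\tfrac{2\pi(x^*+k)}{b}-\cos\tfrac{2\pi(x^*+l)}{b}\Big|\le\frac{2\gamma}{b-\gamma},$$ and $$4\sin^2\frac{\pi(k-l)}{b}\le\Big(\frac{2\gamma\Delta_{b,\gamma}}{1-\gamma^2}\Big)^2+\Big(\frac{2\gamma}{b-\gamma}\Big)^2\le\Big(\frac{2\gamma}{1-\gamma}\Big)^2+\Big(\frac{2\gamma}{b-\gamma}\Big)^2.$$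
   Context: $\mathcal{A}=\{0,\dots,b-1\}$. $S(x,\mathbf{i})=\sum_{n\ge1}\gamma^{n-1}\psi\big(\frac{x+i_1+i_2b+\cdots+i_nb^{n-1}}{b^n}\big)$ for $\mathbf{i}\in\mathcal{A}^{\mathbb{Z}^+}$, $S'=\partial_xS$. Sequences $\mathbf{i},\mathbf{j}$ are $(\varepsilon,\delta)$-tangent at $x_0$ if $|S(x_0,\mathbf{i})-S(x_0,\mathbf{j})|\le\varepsilon$ and $|S'(x_0,\mathbf{i})-S'(x_0,\mathbf{j})|\le\delta$. $E(1,x_0;\varepsilon,\delta)$ is the set of pairs $(k,l)\in\mathcal{A}\times\mathcal{A}$ such that for some $\mathbf{u},\mathbf{v}\in\mathcal{A}^{\mathbb{Z}^+}$ the sequences $k\mathbf{u},l\mathbf{v}$ (prepending $k$, resp. $l$) are $(\varepsilon,\delta)$-tangent at $x_0$; $E(1,x_0)=\bigcap_{\varepsilon,\delta>0}E(1,x_0;\varepsilon,\delta)$. *)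

theory Defs
  imports "HOL-Analysis.Analysis"
begin

definition psi :: "real \<Rightarrow> real" where
  "psi y = - 2 * pi * sin (2 * pi * y)"

text \<open>Sequences in A^{Z+} are represented 0-indexed: i_1 = i 0, i_n = i (n-1).
  S(x,i) = sum_{n>=1} gamma^(n-1) psi((x + i_1 + i_2 b + ... + i_n b^(n-1)) / b^n).\<close>
definition S :: "nat \<Rightarrow> real \<Rightarrow> real \<Rightarrow> (nat \<Rightarrow> nat) \<Rightarrow> real" where
  "S b \<gamma> x i = (\<Sum>n. \<gamma> ^ n * psi ((x + (\<Sum>m<Suc n. real (i m) * real b ^ m)) / real b ^ Suc n))"

definition S' :: "nat \<Rightarrow> real \<Rightarrow> real \<Rightarrow> (nat \<Rightarrow> nat) \<Rightarrow> real" where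
  "S' b \<gamma> x i = deriv (\<lambda>y. S b \<gamma> y i) x"

definition digit_seq :: "nat \<Rightarrow> (nat \<Rightarrow> nat) \<Rightarrow> bool" where
  "digit_seq b i \<longleftrightarrow> (\<forall>n. i n < b)"

definition tangent :: "nat \<Rightarrow> real \<Rightarrow> real \<Rightarrow> real \<Rightarrow> real \<Rightarrow> (nat \<Rightarrow> nat) \<Rightarrow> (nat \<Rightarrow> nat) \<Rightarrow> bool" where
  "tangent b \<gamma> \<epsilon> \<delta> x0 i j \<longleftrightarrow>
     \<bar>S b \<gamma> x0 i - S b \<gamma> x0 j\<bar> \<le> \<epsilon> \<and> \<bar>S' b \<gamma> x0 i - S' b \<gamma> x0 j\<bar> \<le> \<delta>"

text \<open>Prepending k to u: case_nat k u.\<close>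
definition E1_eps :: "nat \<Rightarrow> real \<Rightarrow> real \<Rightarrow> real \<Rightarrow> real \<Rightarrow> (nat \<times> nat) set" where
  "E1_eps b \<gamma> x0 \<epsilon> \<delta> = {(k, l). k < b \<and> l < b \<and>
     (\<exists>u v. digit_seq b u \<and> digit_seq b v \<and>
        tangent b \<gamma> \<epsilon> \<delta> x0 (case_nat k u) (case_nat l v))}"

definition E1 :: "nat \<Rightarrow> real \<Rightarrow> real \<Rightarrow> (nat \<times> nat) set" where
  "E1 b \<gamma> x0 = (\<Inter>\<epsilon>\<in>{0<..}. \<Inter>\<delta>\<in>{0<..}. E1_eps b \<gamma> x0 \<epsilon> \<delta>)"

definition Delta :: "nat \<Rightarrow> real \<Rightarrow> real" where
  "Delta b \<gamma> = (SUP t. sin (real b * t) + \<gamma> * sin t)"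

end

theory Submission
  imports Defs
begin

definition tt :: "nat \<Rightarrow> real \<Rightarrow> (nat \<Rightarrow> nat) \<Rightarrow> nat \<Rightarrow> real" where
  "tt b x i n = 2*pi*(x + (\<Sum>m<Suc n. real (i m) * real b ^ m)) / real b ^ Suc n"

lemma psi_tt: "psi ((x + (\<Sum>m<Suc n. real (i m) * real b ^ m)) / real b ^ Suc n) = -2*pi* sin (tt b x i n)"
  by (simp add: psi_def tt_def)

lemma sin_shift: "sin (th + 2*pi*real (m::nat)) = sin th"
proof (induction m)
  case 0 then show ?case by simp
next
  case (Suc m)
  have "th + 2*pi*real (Suc m) = (th + 2*pi*real m) + 2*pi" by (simp add: algebra_simps)
  then show ?case using Suc.IH by (simp only: sin_periodic)
qed

lemma tt_Suc: assumes "b > 0"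
  shows "real b * tt b x i (Suc n) = tt b x i n + 2*pi*real (i (Suc n))"
  using assms by (simp add: tt_def field_simps)

lemma sin_tt: assumes "b > 0" shows "sin (real b * tt b x i (Suc n)) = sin (tt b x i n)"
  using tt_Suc[OF assms] sin_shift by simp

lemma Delta_bdd: "bdd_above (range (\<lambda>t. sin (real b * t) + \<gamma> * sin t))"
proof (rule bdd_aboveI2)
  fix t
  have "\<bar>\<gamma> * sin t\<bar> \<le> \<bar>\<gamma>\<bar>" using abs_sin_le_one[of t]
    by (simp add: abs_mult mult_left_le)
  then show "sin (real b * t) + \<gamma> * sin t \<le> 1 + \<bar>\<gamma>\<bar>" using sin_le_one[of "real b * t"] by linarith
qed

lemma Delta_ge: "sin (real b * t) + \<gamma> * sin t \<le> Delta b \<gamma>"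
  unfolding Delta_def by (rule cSUP_upper[OF _ Delta_bdd]) simp

lemma Delta_ge_neg: "- Delta b \<gamma> \<le> sin (real b * t) + \<gamma> * sin t"
  using Delta_ge[of b "-t" \<gamma>] by simp

lemma Delta_nonneg: "0 \<le> Delta b \<gamma>"
  using Delta_ge[of b 0 \<gamma>] by simp

lemma Delta_le: assumes "0 \<le> \<gamma>" shows "Delta b \<gamma> \<le> 1 + \<gamma>"
  unfolding Delta_def
proof (rule cSUP_least)
  fix t
  have "\<gamma> * sin t \<le> \<gamma>" using sin_le_one[of t] assms by (simp add: mult_left_le)
  then show "sin (real b * t) + \<gamma> * sin t \<le> 1 + \<gamma>" using sin_le_one[of "real b * t"] by linarith
qed simp

lemma S_sums: assumes "b \<ge> 2" "0 < \<gamma>" "\<gamma> < 1"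
  shows "(\<lambda>n. -2*pi*\<gamma>^n* sin (tt b x i n)) sums S b \<gamma> x i"
proof -
  have eq: "(\<lambda>n. \<gamma> ^ n * psi ((x + (\<Sum>m<Suc n. real (i m) * real b ^ m)) / real b ^ Suc n))
      = (\<lambda>n. -2*pi*\<gamma>^n* sin (tt b x i n))" by (intro ext, subst psi_tt, simp)
  have "summable (\<lambda>n. -2*pi*\<gamma>^n* sin (tt b x i n))"
  proof (rule summable_comparison_test)
    show "\<exists>N. \<forall>n\<ge>N. norm (-2*pi*\<gamma>^n* sin (tt b x i n)) \<le> 2*pi*\<gamma>^n"
      using assms abs_sin_le_one by (auto simp: abs_mult intro!: mult_left_le)
    show "summable (\<lambda>n. 2*pi*\<gamma>^n)" using assms by (intro summable_mult summable_geometric) auto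
  qed
  then show ?thesis unfolding S_def eq by (rule summable_sums)
qed

lemma S_tail: assumes "b \<ge> 2" "0 < \<gamma>" "\<gamma> < 1"
  shows "\<bar>S b \<gamma> x i + 2*pi* sin (tt b x i 0)\<bar> \<le> 2*pi*Delta b \<gamma>*\<gamma>/(1-\<gamma>\<^sup>2)"
proof -
  define a where "a = (\<lambda>n. -2*pi*\<gamma>^n* sin (tt b x i n))"
  have s: "a sums S b \<gamma> x i" using S_sums[OF assms] unfolding a_def .
  have "(\<lambda>n. a (Suc n)) sums (S b \<gamma> x i - a 0)"
    by (subst sums_Suc_iff) (use s in simp)
  from sums_group[OF this, of 2]
  have g: "(\<lambda>j. a (Suc (2*j)) + a (Suc (Suc (2*j)))) sums (S b \<gamma> x i - a 0)"
    by (simp add: mult.commute)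
  define B where "B = 2*pi*Delta b \<gamma>*\<gamma>"
  have g2: "norm (\<gamma>\<^sup>2) < 1" using assms by (simp add: power_less_one_iff abs_less_iff)
  have geo: "(\<lambda>j. B * (\<gamma>\<^sup>2)^j) sums (B/(1-\<gamma>\<^sup>2))"
    using sums_mult[OF geometric_sums[OF g2], of B] by simp
  have bp: "b > 0" using assms by simp
  have trm: "a (Suc (2*j)) + a (Suc (Suc (2*j)))
      = -2*pi*\<gamma>^(Suc (2*j)) * (sin (real b * tt b x i (Suc (Suc (2*j)))) + \<gamma> * sin (tt b x i (Suc (Suc (2*j)))))" for j
    unfolding a_def sin_tt[OF bp] by (simp only: power_Suc) (simp add: algebra_simps)
  have pw: "\<gamma>^(Suc (2*j)) = \<gamma> * (\<gamma>\<^sup>2)^j" for j by (simp add: power_mult)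
  have Beq: "B*(\<gamma>\<^sup>2)^j = 2*pi*\<gamma>^(Suc(2*j))*Delta b \<gamma>" for j
    unfolding B_def pw by (simp add: algebra_simps)
  have up: "a (Suc (2*j)) + a (Suc (Suc (2*j))) \<le> B * (\<gamma>\<^sup>2)^j" for j
  proof -
    have nn: "0 \<le> 2*pi*\<gamma>^(Suc (2*j))" using assms by simp
    have h: "2*pi*\<gamma>^(Suc (2*j)) * (- Delta b \<gamma>) \<le> 2*pi*\<gamma>^(Suc (2*j)) * (sin (real b * tt b x i (Suc (Suc (2*j)))) + \<gamma> * sin (tt b x i (Suc (Suc (2*j)))))"
      by (rule mult_left_mono[OF Delta_ge_neg nn])
    show ?thesis unfolding trm Beq using h by linarith
  qed
  have lo: "- (B * (\<gamma>\<^sup>2)^j) \<le> a (Suc (2*j)) + a (Suc (Suc (2*j)))" for j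
  proof -
    have nn: "0 \<le> 2*pi*\<gamma>^(Suc (2*j))" using assms by simp
    have h: "2*pi*\<gamma>^(Suc (2*j)) * (sin (real b * tt b x i (Suc (Suc (2*j)))) + \<gamma> * sin (tt b x i (Suc (Suc (2*j))))) \<le> 2*pi*\<gamma>^(Suc (2*j)) * Delta b \<gamma>"
      by (rule mult_left_mono[OF Delta_ge nn])
    show ?thesis unfolding trm Beq using h by linarith
  qed
  have "S b \<gamma> x i - a 0 \<le> B/(1-\<gamma>\<^sup>2)" by (rule sums_le[OF _ g geo]) (use up in auto)
  moreover have "- (B/(1-\<gamma>\<^sup>2)) \<le> S b \<gamma> x i - a 0"
    by (rule sums_le[OF _ sums_minus[OF geo] g]) (use lo in auto)
  ultimately show ?thesis unfolding B_def a_def by simp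
qed


lemma term_deriv:
  assumes "b > 0"
  shows "((\<lambda>y. \<gamma> ^ n * psi ((y + (\<Sum>m<Suc n. real (i m) * real b ^ m)) / real b ^ Suc n))
     has_field_derivative (-4*pi\<^sup>2*\<gamma>^n* cos (tt b y i n)/real b ^ Suc n)) (at y)"
proof -
  define c where "c = (\<Sum>m<Suc n. real (i m) * real b ^ m)"
  define B where "B = real b ^ Suc n"
  have d1: "((\<lambda>y. \<gamma> ^ n * (- 2 * pi * sin (2 * pi * ((y + c) / B))))
     has_field_derivative (\<gamma> ^ n * (- 2 * pi * (cos (2 * pi * ((y + c) / B)) * (2 * pi * (1 / B)))))) (at y)"
    using assms unfolding B_def by (intro derivative_intros DERIV_cmult) (auto intro!: derivative_eq_intros)
  have d2: "\<gamma> ^ n * (- 2 * pi * (cos (2 * pi * ((y + c) / B)) * (2 * pi * (1 / B))))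
     = -4*pi\<^sup>2*\<gamma>^n* cos (tt b y i n)/B"
    using assms unfolding tt_def c_def B_def by (simp add: power2_eq_square)
  have eqf: "(\<lambda>y. \<gamma> ^ n * psi ((y + c) / B)) = (\<lambda>y. \<gamma> ^ n * (- 2 * pi * sin (2 * pi * ((y + c) / B))))"
    by (simp add: psi_def)
  show ?thesis unfolding c_def[symmetric] B_def[symmetric] eqf d2[symmetric] by (rule d1)
qed

lemma S'_sums: assumes "b \<ge> 2" "0 < \<gamma>" "\<gamma> < 1"
  shows "(\<lambda>n. -4*pi\<^sup>2*\<gamma>^n* cos (tt b x i n)/real b ^ Suc n) sums S' b \<gamma> x i"
proof -
  have bp: "b > 0" using assms by simp
  define f where "f = (\<lambda>n y. \<gamma> ^ n * psi ((y + (\<Sum>m<Suc n. real (i m) * real b ^ m)) / real b ^ Suc n))"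
  define f' where "f' = (\<lambda>n y. -4*pi\<^sup>2*\<gamma>^n* cos (tt b y i n)/real b ^ Suc n)"
  define M where "M = (\<lambda>n. 4*pi\<^sup>2/real b * (\<gamma>/real b)^n)"
  have gb: "norm (\<gamma>/real b) < 1" using assms by auto
  have sM: "summable M" unfolding M_def by (intro summable_mult summable_geometric gb)
  have bnd: "norm (f' n y) \<le> M n" for n y
  proof -
    have "norm (f' n y) = 4*pi\<^sup>2*\<gamma>^n*\<bar>cos (tt b y i n)\<bar>/real b ^ Suc n"
      unfolding f'_def using assms by (simp add: abs_mult)
    also have "\<dots> \<le> 4*pi\<^sup>2*\<gamma>^n*1/real b ^ Suc n"
      using assms abs_cos_le_one by (intro divide_right_mono mult_left_mono) auto
    also have "\<dots> = M n" unfolding M_def by (simp add: power_divide)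
    finally show ?thesis .
  qed
  have uc: "uniformly_convergent_on UNIV (\<lambda>n x. \<Sum>i<n. f' i x)"
    by (rule Weierstrass_m_test'[OF _ sM]) (rule bnd)
  have s0: "summable (\<lambda>n. f n x)"
  proof -
    have "(\<lambda>n. f n x) = (\<lambda>n. -2*pi*\<gamma>^n* sin (tt b x i n))"
      unfolding f_def by (intro ext, subst psi_tt, simp)
    then show ?thesis using S_sums[OF assms, of x i] sums_summable by metis
  qed
  have D: "((\<lambda>x. \<Sum>n. f n x) has_field_derivative (\<Sum>n. f' n x)) (at x)"
  proof -
    have hd: "\<And>n y. y \<in> UNIV \<Longrightarrow> (f n has_field_derivative f' n y) (at y within UNIV)"
      unfolding f_def f'_def using term_deriv[OF bp] by simp
    have xi: "x \<in> interior (UNIV::real set)" by simp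
    show ?thesis by (rule has_field_derivative_series'(2)[OF convex_UNIV hd uc UNIV_I s0 xi])
  qed
  have "(\<lambda>y. S b \<gamma> y i) = (\<lambda>x. \<Sum>n. f n x)" unfolding S_def f_def by simp
  then have "S' b \<gamma> x i = (\<Sum>n. f' n x)" unfolding S'_def using DERIV_imp_deriv[OF D] by simp
  moreover have "summable (\<lambda>n. f' n x)"
    by (rule summable_comparison_test[OF _ sM]) (use bnd in auto)
  ultimately show ?thesis unfolding f'_def by (simp add: summable_sums)
qed


lemma S'_tail: assumes "b \<ge> 2" "0 < \<gamma>" "\<gamma> < 1"
  shows "\<bar>S' b \<gamma> x i + 4*pi\<^sup>2* cos (tt b x i 0)/real b\<bar> \<le> 4*pi\<^sup>2*\<gamma>/(real b*(real b-\<gamma>))"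
proof -
  define d where "d = (\<lambda>n. -4*pi\<^sup>2*\<gamma>^n* cos (tt b x i n)/real b ^ Suc n)"
  have s: "d sums S' b \<gamma> x i" using S'_sums[OF assms] unfolding d_def .
  have t: "(\<lambda>n. d (Suc n)) sums (S' b \<gamma> x i - d 0)"
    by (subst sums_Suc_iff) (use s in simp)
  define C where "C = 4*pi\<^sup>2*\<gamma>/(real b)\<^sup>2"
  have gb: "norm (\<gamma>/real b) < 1" using assms by auto
  have geo: "(\<lambda>n. C * (\<gamma>/real b)^n) sums (C * (1/(1-\<gamma>/real b)))"
    by (rule sums_mult[OF geometric_sums[OF gb]])
  have Ceq: "C * (1/(1-\<gamma>/real b)) = 4*pi\<^sup>2*\<gamma>/(real b*(real b-\<gamma>))"
    using assms unfolding C_def by (simp add: field_simps power2_eq_square)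
  have bnd: "\<bar>d (Suc n)\<bar> \<le> C * (\<gamma>/real b)^n" for n
  proof -
    have "\<bar>d (Suc n)\<bar> = 4*pi\<^sup>2*\<gamma>^Suc n*\<bar>cos (tt b x i (Suc n))\<bar>/real b ^ Suc (Suc n)"
      unfolding d_def using assms by (simp add: abs_mult)
    also have "\<dots> \<le> 4*pi\<^sup>2*\<gamma>^Suc n*1/real b ^ Suc (Suc n)"
      using assms abs_cos_le_one by (intro divide_right_mono mult_left_mono) auto
    also have "\<dots> = C * (\<gamma>/real b)^n" unfolding C_def using assms
      by (simp add: power_divide field_simps power2_eq_square)
    finally show ?thesis .
  qed
  have bnd2: "- (C * (\<gamma>/real b)^n) \<le> d (Suc n)" "d (Suc n) \<le> C * (\<gamma>/real b)^n" for n
    using bnd[of n] by (simp_all add: abs_le_iff)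
  have "S' b \<gamma> x i - d 0 \<le> C * (1/(1-\<gamma>/real b))"
    by (rule sums_le[OF _ t geo]) (use bnd2 in auto)
  moreover have "- (C * (1/(1-\<gamma>/real b))) \<le> S' b \<gamma> x i - d 0"
    by (rule sums_le[OF _ sums_minus[OF geo] t]) (use bnd2 in auto)
  ultimately show ?thesis unfolding Ceq[symmetric] d_def by simp
qed

lemma tt0_Suc: "tt b x (case_nat k u) 0 = 2 * pi * (x + real k) / real b"
  by (simp add: tt_def)

lemma sq_identity: fixes a c :: real shows "(sin a - sin c)\<^sup>2 + (cos a - cos c)\<^sup>2 = 4 * (sin ((a - c)/2))\<^sup>2"
proof -
  have "(sin a - sin c)\<^sup>2 + (cos a - cos c)\<^sup>2 = 2 - 2 * cos (a - c)"
    by (simp add: power2_eq_square cos_diff algebra_simps)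
  also have "cos (a - c) = 1 - 2 * (sin ((a - c)/2))\<^sup>2"
  proof -
    have "a - c = 2*((a-c)/2)" by simp
    then show ?thesis by (metis cos_double_sin)
  qed
  finally show ?thesis by simp
qed

theorem lemma3p3:
  fixes b k l :: nat and \<gamma> x :: real
  assumes "b \<ge> 2" and "1 / real b < \<gamma>" and "\<gamma> < 1"
    and "k < b" and "l < b"
    and "(k, l) \<in> E1 b \<gamma> x"
  shows "\<bar>sin (2 * pi * (x + k) / b) - sin (2 * pi * (x + l) / b)\<bar>
           \<le> 2 * Delta b \<gamma> * \<gamma> / (1 - \<gamma>\<^sup>2)
       \<and> 2 * Delta b \<gamma> * \<gamma> / (1 - \<gamma>\<^sup>2) \<le> 2 * \<gamma> / (1 - \<gamma>)
       \<and> \<bar>cos (2 * pi * (x + k) / b) - cos (2 * pi * (x + l) / b)\<bar> \<le> 2 * \<gamma> / (b - \<gamma>)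
       \<and> 4 * (sin (pi * (real k - real l) / b))\<^sup>2
           \<le> (2 * \<gamma> * Delta b \<gamma> / (1 - \<gamma>\<^sup>2))\<^sup>2 + (2 * \<gamma> / (b - \<gamma>))\<^sup>2
       \<and> (2 * \<gamma> * Delta b \<gamma> / (1 - \<gamma>\<^sup>2))\<^sup>2 + (2 * \<gamma> / (b - \<gamma>))\<^sup>2
           \<le> (2 * \<gamma> / (1 - \<gamma>))\<^sup>2 + (2 * \<gamma> / (b - \<gamma>))\<^sup>2"
proof -
  have bp: "b > 0" and br: "real b \<ge> 2" using assms by auto
  have g0: "0 < \<gamma>" using assms(2) bp by (smt (verit) divide_pos_pos of_nat_0_less_iff)
  have g1: "\<gamma> < 1" by fact
  have gsq: "0 < 1 - \<gamma>\<^sup>2" using g0 g1 by (simp add: power_less_one_iff abs_less_iff)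
  have bg: "0 < real b - \<gamma>" using br g1 by linarith
  define sk where "sk = sin (2 * pi * (x + k) / b)"
  define sl where "sl = sin (2 * pi * (x + l) / b)"
  define ck where "ck = cos (2 * pi * (x + k) / b)"
  define cl where "cl = cos (2 * pi * (x + l) / b)"
  define A where "A = 2 * Delta b \<gamma> * \<gamma> / (1 - \<gamma>\<^sup>2)"
  define Cc where "Cc = 2 * \<gamma> / (b - \<gamma>)"
  have E: "\<exists>u v. tangent b \<gamma> \<epsilon> \<epsilon> x (case_nat k u) (case_nat l v)" if "\<epsilon> > 0" for \<epsilon>
    using assms(6) that unfolding E1_def E1_eps_def by fastforce
  have Ti: "\<bar>S b \<gamma> x (case_nat m u) + 2*pi* sin (2 * pi * (x + m) / b)\<bar> \<le> 2*pi*Delta b \<gamma>*\<gamma>/(1-\<gamma>\<^sup>2)" for m u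
    using S_tail[OF assms(1) g0 g1, of x "case_nat m u"] by (simp add: tt0_Suc)
  have T'i: "\<bar>S' b \<gamma> x (case_nat m u) + 4*pi\<^sup>2/b * cos (2 * pi * (x + m) / b)\<bar> \<le> 4*pi\<^sup>2/b * (\<gamma>/(b-\<gamma>))" for m u
    using S'_tail[OF assms(1) g0 g1, of x "case_nat m u"] by (simp add: tt0_Suc)
  have hA: "2*pi*A = 2*(2*pi*Delta b \<gamma>*\<gamma>/(1-\<gamma>\<^sup>2))" unfolding A_def by simp
  have hC: "4*pi\<^sup>2/b * Cc = 2*(4*pi\<^sup>2/b * (\<gamma>/(b-\<gamma>)))" unfolding Cc_def by simp
  have sinb: "\<bar>sk - sl\<bar> \<le> A"
  proof (rule field_le_epsilon)
    fix e :: real assume e: "0 < e"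
    then obtain u v where tg: "tangent b \<gamma> (2*pi*e) (2*pi*e) x (case_nat k u) (case_nat l v)"
      using E[of "2*pi*e"] by auto
    have h3: "\<bar>S b \<gamma> x (case_nat k u) - S b \<gamma> x (case_nat l v)\<bar> \<le> 2*pi*e"
      using tg unfolding tangent_def by simp
    define Bd where "Bd = 2*pi*Delta b \<gamma>*\<gamma>/(1-\<gamma>\<^sup>2)"
    have h1: "\<bar>S b \<gamma> x (case_nat k u) + 2*pi* sk\<bar> \<le> Bd" using Ti[of k u] unfolding sk_def Bd_def .
    have h2: "\<bar>S b \<gamma> x (case_nat l v) + 2*pi* sl\<bar> \<le> Bd" using Ti[of l v] unfolding sl_def Bd_def .
    have hA': "2*pi*A = 2*Bd" using hA unfolding Bd_def .
    have "2*pi* sk - 2*pi* sl \<le> 2*pi*A + 2*pi*e" "-(2*pi*A) - 2*pi*e \<le> 2*pi* sk - 2*pi* sl"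
      using h1 h2 h3 hA' unfolding abs_le_iff by linarith+
    then have "2*pi*(sk - sl) \<le> 2*pi*(A + e)" "2*pi*(-(A+e)) \<le> 2*pi*(sk - sl)"
      by (simp_all add: algebra_simps)
    then have "sk - sl \<le> A + e" "-(A+e) \<le> sk - sl" by (simp_all add: mult_le_cancel_left_pos)
    then show "\<bar>sk - sl\<bar> \<le> A + e" by (simp add: abs_le_iff)
  qed
  have cosb: "\<bar>ck - cl\<bar> \<le> Cc"
  proof (rule field_le_epsilon)
    fix e :: real assume e: "0 < e"
    have Kp: "0 < 4*pi\<^sup>2/b" using bp by simp
    then obtain u v where tg: "tangent b \<gamma> (4*pi\<^sup>2/b*e) (4*pi\<^sup>2/b*e) x (case_nat k u) (case_nat l v)"
      using E[of "4*pi\<^sup>2/b*e"] e Kp mult_pos_pos by blast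
    have h3: "\<bar>S' b \<gamma> x (case_nat k u) - S' b \<gamma> x (case_nat l v)\<bar> \<le> 4*pi\<^sup>2/b*e"
      using tg unfolding tangent_def by simp
    define Bd where "Bd = 4*pi\<^sup>2/b * (\<gamma>/(b-\<gamma>))"
    define K where "K = 4*pi\<^sup>2/b"
    have h1: "\<bar>S' b \<gamma> x (case_nat k u) + K* ck\<bar> \<le> Bd" using T'i[of k u] unfolding ck_def Bd_def K_def .
    have h2: "\<bar>S' b \<gamma> x (case_nat l v) + K* cl\<bar> \<le> Bd" using T'i[of l v] unfolding cl_def Bd_def K_def .
    have hC': "K*Cc = 2*Bd" using hC unfolding Bd_def K_def .
    have h3': "\<bar>S' b \<gamma> x (case_nat k u) - S' b \<gamma> x (case_nat l v)\<bar> \<le> K*e" using h3 unfolding K_def .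
    have "K*ck - K*cl \<le> K*Cc + K*e" "-(K*Cc) - K*e \<le> K*ck - K*cl"
      using h1 h2 h3' hC' unfolding abs_le_iff by linarith+
    then have "K*(ck - cl) \<le> K*(Cc + e)" "K*(-(Cc+e)) \<le> K*(ck - cl)"
      by (simp_all add: algebra_simps)
    moreover have "0 < K" using Kp unfolding K_def .
    ultimately have "ck - cl \<le> Cc + e" "-(Cc+e) \<le> ck - cl" by (simp_all add: mult_le_cancel_left_pos)
    then show "\<bar>ck - cl\<bar> \<le> Cc + e" by (simp add: abs_le_iff)
  qed
  have A0: "0 \<le> A" unfolding A_def using Delta_nonneg[of b \<gamma>] g0 gsq by simp
  have A2: "A \<le> 2 * \<gamma> / (1 - \<gamma>)"
  proof -
    have "A \<le> 2 * (1+\<gamma>) * \<gamma> / (1 - \<gamma>\<^sup>2)" unfolding A_def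
      using Delta_le[of \<gamma> b] g0 gsq by (intro divide_right_mono mult_right_mono) auto
    also have "\<dots> = 2 * \<gamma> / (1 - \<gamma>)" using g0 g1 gsq
      by (simp add: field_simps power2_eq_square)
    finally show ?thesis .
  qed
  have arg: "pi * (real k - real l) / b = (2 * pi * (x + k) / b - 2 * pi * (x + l) / b) / 2"
    using bp by (simp add: field_simps)
  have four: "4 * (sin (pi * (real k - real l) / b))\<^sup>2 = (sk - sl)\<^sup>2 + (ck - cl)\<^sup>2"
    unfolding arg sk_def sl_def ck_def cl_def by (rule sq_identity[symmetric])
  have s1: "(sk - sl)\<^sup>2 \<le> A\<^sup>2" using power_mono[OF sinb abs_ge_zero, of 2] by simp
  have s2: "(ck - cl)\<^sup>2 \<le> Cc\<^sup>2" using power_mono[OF cosb abs_ge_zero, of 2] by simp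
  have s3: "A\<^sup>2 \<le> (2 * \<gamma> / (1 - \<gamma>))\<^sup>2" using power_mono[OF A2 A0, of 2] .
  have AA: "2 * \<gamma> * Delta b \<gamma> / (1 - \<gamma>\<^sup>2) = A" unfolding A_def by (simp add: mult_ac)
  show ?thesis
    unfolding AA using sinb cosb A2 four s1 s2 s3
    unfolding sk_def sl_def ck_def cl_def A_def[symmetric] Cc_def[symmetric] by linarith
qed

end
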